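(* In the dynamic oligopoly model of the context with $\delta>1/2$ and $M(s)=\sum_{x\ge0}k(x)s(x)$, where $k\ge0$ is increasing and $k(x)\le C_kx^{p_k}$ for constants $C_k>0$, $p_k\ge0$: for every $m$ and every policy $g(\cdot,m):X\to A$, the Markov chain with kernel $W(x,g(x,m),\cdot)$ is irreducible, aperiodic and positive recurrent, hence has a unique invariant distribution $s^{m,g}$, and all moments of $s^{m,g}$ are bounded uniformly over $m$ and $g$. Consequently, with $a=0$, $d(x,y)=|x-y|$, $x_0=0$ and $p=2$, there exists $b>0$ such that for every $m\in[0,b]$ and policy $g$: $s^{m,g}$ is unique, $M(s^{0,g})\ge0$, $M(s^{b,g})\le b$, and $\sum_x x^2 s^{m,g}(x)\le C$ for a constant $C<\infty$ independent of $m$ and $g$.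
   Context: Dynamic oligopoly model. States $X=\{0,1,2,\dots\}$; actions $A=[\underline a,1]$ with $0<\underline a<1$. For $x\ge1$: $W(x,a,x+1)=\frac{(1-\delta)a}{1+a}$, $W(x,a,x)=\frac{1-\delta+\delta a}{1+a}$, $W(x,a,x-1)=\frac{\delta}{1+a}$, $W(x,a,y)=0$ otherwise; $W(0,a,1)=\frac{(1-\delta)a}{1+a}$, $W(0,a,0)=1-W(0,a,1)$; $\delta\in(0,1)$. A policy is any map $x\mapsto g(x,m)\in A$. *)

theory Defs
  imports "HOL-Analysis.Analysis"
begin

definition W :: "real \<Rightarrow> nat \<Rightarrow> real \<Rightarrow> nat \<Rightarrow> real" where
  "W \<delta> x a y =
     (if x = 0 then
        (if y = 1 then (1 - \<delta>) * a / (1 + a)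
         else if y = 0 then 1 - (1 - \<delta>) * a / (1 + a) else 0)
      else
        (if y = x + 1 then (1 - \<delta>) * a / (1 + a)
         else if y = x then (1 - \<delta> + \<delta> * a) / (1 + a)
         else if y + 1 = x then \<delta> / (1 + a) else 0))"

definition kern :: "real \<Rightarrow> (nat \<Rightarrow> real \<Rightarrow> real) \<Rightarrow> real \<Rightarrow> nat \<Rightarrow> nat \<Rightarrow> real" where
  "kern \<delta> g m = (\<lambda>x y. W \<delta> x (g x m) y)"

primrec Pn :: "(nat \<Rightarrow> nat \<Rightarrow> real) \<Rightarrow> nat \<Rightarrow> nat \<Rightarrow> nat \<Rightarrow> real" where
  "Pn P 0 x y = (if x = y then 1 else 0)"
| "Pn P (Suc n) x y = (\<Sum>\<^sub>\<infinity>z. P x z * Pn P n z y)"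

text \<open>First-passage probabilities: probability, starting at x, of the first visit
  to y (at a positive time) occurring at time n.\<close>
primrec fp :: "(nat \<Rightarrow> nat \<Rightarrow> real) \<Rightarrow> nat \<Rightarrow> nat \<Rightarrow> nat \<Rightarrow> real" where
  "fp P 0 x y = 0"
| "fp P (Suc n) x y = (if n = 0 then P x y else (\<Sum>\<^sub>\<infinity>z\<in>-{y}. P x z * fp P n z y))"

definition irreducible_mc :: "(nat \<Rightarrow> nat \<Rightarrow> real) \<Rightarrow> bool" where
  "irreducible_mc P \<longleftrightarrow> (\<forall>x y. \<exists>n. Pn P n x y > 0)"

definition period :: "(nat \<Rightarrow> nat \<Rightarrow> real) \<Rightarrow> nat \<Rightarrow> nat" where
  "period P x = Gcd {n. 0 < n \<and> Pn P n x x > 0}"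

definition aperiodic_mc :: "(nat \<Rightarrow> nat \<Rightarrow> real) \<Rightarrow> bool" where
  "aperiodic_mc P \<longleftrightarrow> (\<forall>x. period P x = 1)"

definition positive_recurrent_mc :: "(nat \<Rightarrow> nat \<Rightarrow> real) \<Rightarrow> bool" where
  "positive_recurrent_mc P \<longleftrightarrow>
     (\<forall>x. (\<lambda>n. fp P n x x) sums 1 \<and> summable (\<lambda>n. real n * fp P n x x))"

definition stationary :: "(nat \<Rightarrow> nat \<Rightarrow> real) \<Rightarrow> (nat \<Rightarrow> real) \<Rightarrow> bool" where
  "stationary P s \<longleftrightarrow> (\<forall>x. 0 \<le> s x) \<and> s sums 1 \<and>
     (\<forall>y. ((\<lambda>x. s x * P x y) has_sum s y) UNIV)"

definition invdist :: "(nat \<Rightarrow> nat \<Rightarrow> real) \<Rightarrow> nat \<Rightarrow> real" where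
  "invdist P = (THE s. stationary P s)"

definition Magg :: "(nat \<Rightarrow> real) \<Rightarrow> (nat \<Rightarrow> real) \<Rightarrow> real" where
  "Magg k s = (\<Sum>x. k x * s x)"

text \<open>x^p for real exponent with the convention 0^0 = 1.\<close>
definition rpow :: "real \<Rightarrow> real \<Rightarrow> real" where
  "rpow x p = (if p = 0 then 1 else x powr p)"

end

theory Submission
  imports Defs
begin


lemma fs_has_sum:
  fixes f :: "'a \<Rightarrow> real"
  assumes "finite F" "\<And>z. z \<notin> F \<Longrightarrow> f z = 0"
  shows "(f has_sum sum f (A \<inter> F)) A"
proof -
  have "(f has_sum sum f (A \<inter> F)) (A \<inter> F)" using assms(1) by (intro has_sum_finite) auto
  then show ?thesis
    by (subst (asm) has_sum_cong_neutral[where T=A and g=f]) (use assms(2) in auto)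
qed

lemma fs_infsum:
  fixes f :: "'a \<Rightarrow> real"
  assumes "finite F" "\<And>z. z \<notin> F \<Longrightarrow> f z = 0"
  shows "infsum f A = sum f (A \<inter> F)"
  using fs_has_sum[OF assms] by (rule infsumI)

primrec qq :: "(nat \<Rightarrow> nat \<Rightarrow> real) \<Rightarrow> nat \<Rightarrow> nat \<Rightarrow> nat \<Rightarrow> real" where
  "qq P y 0 z = 1"
| "qq P y (Suc n) z = (\<Sum>\<^sub>\<infinity>w\<in>-{y}. P z w * qq P y n w)"

definition nb :: "nat \<Rightarrow> nat set" where "nb x = {x - 1, x, Suc x}"

lemma nb_finite[simp]: "finite (nb x)" by (simp add: nb_def)

lemma telesc: "(\<Sum>k<N. real (Suc k) * (q k - q (Suc k))) = (\<Sum>k<N. q k) - real N * (q N :: real)"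
  by (induction N) (auto simp: algebra_simps)


lemma summable_poly_geo:
  fixes \<rho> :: real
  assumes "0 < \<rho>" "\<rho> < 1"
  shows "summable (\<lambda>x. real x ^ q * \<rho> ^ x)"
proof -
  define c where "c = (1 + \<rho>) / 2"
  have c1: "c < 1" and cr: "\<rho> < c" using assms by (auto simp: c_def)
  have "(\<lambda>n. (1 + inverse (real n)) ^ q) \<longlonglongrightarrow> (1 + 0) ^ q"
    by (intro tendsto_intros lim_inverse_n)
  moreover have "1 < c / \<rho>" using assms cr by simp
  ultimately have "eventually (\<lambda>n. (1 + inverse (real n)) ^ q < c / \<rho>) sequentially"
    by (intro order_tendstoD(2)) auto
  then obtain N where N: "\<And>n. N \<le> n \<Longrightarrow> (1 + inverse (real n)) ^ q < c / \<rho>"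
    by (auto simp: eventually_sequentially)
  show ?thesis
  proof (rule summable_ratio_test[where c=c and N="max N 1"])
    show "c < 1" by (rule c1)
    fix n assume n: "max N 1 \<le> n"
    then have n1: "1 \<le> n" and nN: "N \<le> n" by auto
    have "real (Suc n) = (1 + inverse (real n)) * real n" using n1 by (simp add: field_simps)
    then have "real (Suc n) ^ q = (1 + inverse (real n)) ^ q * real n ^ q" by (simp add: power_mult_distrib)
    then have "norm (real (Suc n) ^ q * \<rho> ^ Suc n) = ((1 + inverse (real n)) ^ q * \<rho>) * (real n ^ q * \<rho> ^ n)"
      using assms by (simp add: algebra_simps)
    also have "\<dots> \<le> (c / \<rho> * \<rho>) * (real n ^ q * \<rho> ^ n)"
      using N[OF nN] assms by (intro mult_right_mono mult_left_mono) auto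
    also have "\<dots> = c * norm (real n ^ q * \<rho> ^ n)" using assms by simp
    finally show "norm (real (Suc n) ^ q * \<rho> ^ Suc n) \<le> c * norm (real n ^ q * \<rho> ^ n)" .
  qed
qed

locale bdc =
  fixes up dn :: "nat \<Rightarrow> real" and u e \<rho> :: real
  assumes u_pos: "0 < u" and up_ge: "\<And>x. u \<le> up x"
    and dn_pos: "\<And>x. 0 < dn x" and updn_lt: "\<And>x. up x + dn x < 1"
    and e_pos: "0 < e" and drift: "\<And>x. e \<le> dn x - up x"
    and rho_lt: "\<rho> < 1" and ratio: "\<And>x. up x \<le> \<rho> * dn (Suc x)"
begin

definition K :: "nat \<Rightarrow> nat \<Rightarrow> real" where
  "K x y = (if x = 0 then (if y = 1 then up 0 else if y = 0 then 1 - up 0 else 0)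
     else (if y = Suc x then up x else if y = x then 1 - up x - dn x
     else if Suc y = x then dn x else 0))"

lemma up_pos: "0 < up x" using u_pos up_ge[of x] by linarith
lemma up_lt1: "up x < 1" using dn_pos[of x] updn_lt[of x] by linarith
lemma dn_lt1: "dn x < 1" using up_pos[of x] updn_lt[of x] by linarith

lemma K_nonneg: "0 \<le> K x y"
  using up_pos[of x] up_lt1[of x] dn_pos[of x] updn_lt[of x] by (auto simp: K_def)

lemma K_out: "y \<notin> nb x \<Longrightarrow> K x y = 0"
  by (auto simp: K_def nb_def)

lemma K_col_out: "x \<notin> nb y \<Longrightarrow> K x y = 0"
  by (auto simp: K_def nb_def)

lemma row: "(\<Sum>\<^sub>\<infinity>z\<in>A. K x z * h z) = (\<Sum>z\<in>A \<inter> nb x. K x z * h z)"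
  by (rule fs_infsum[OF nb_finite]) (simp add: K_out)

lemma row_full: "(\<Sum>z\<in>nb x. K x z * h z) = (if x = 0 then (1 - up 0) * h 0 + up 0 * h 1
   else dn x * h (x - 1) + (1 - up x - dn x) * h x + up x * h (Suc x))"
  by (cases x) (auto simp: nb_def K_def)

lemma col_full: "(\<Sum>x\<in>nb y. f x * K x y) = (if y = 0 then f 0 * (1 - up 0) + f 1 * dn 1
   else f (y - 1) * up (y - 1) + f y * (1 - up y - dn y) + f (Suc y) * dn (Suc y))"
  by (cases y) (auto simp: nb_def K_def)

lemma col_has_sum: "((\<lambda>x. f x * K x y) has_sum (\<Sum>x\<in>nb y. f x * K x y)) UNIV"
  using fs_has_sum[OF nb_finite, where f="\<lambda>x. f x * K x y" and A=UNIV] by (simp add: K_col_out)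

lemma row_sum1: "(\<Sum>z\<in>nb x. K x z) = 1"
  using row_full[of x "\<lambda>_. 1"] by auto


lemma Pn_Suc: "Pn K (Suc n) x y = (\<Sum>z\<in>nb x. K x z * Pn K n z y)"
  using row[where A=UNIV and x=x and h="\<lambda>z. Pn K n z y"] by simp

lemma Pn_nonneg: "0 \<le> Pn K n x y"
proof (induction n arbitrary: x)
  case 0 then show ?case by simp
next
  case (Suc n) then show ?case by (simp only: Pn_Suc) (intro sum_nonneg mult_nonneg_nonneg K_nonneg)
qed

lemma Pn_ge: "K x w * Pn K n w y \<le> Pn K (Suc n) x y"
proof (cases "w \<in> nb x")
  case True
  then show ?thesis unfolding Pn_Suc
    by (intro member_le_sum) (auto intro: mult_nonneg_nonneg K_nonneg Pn_nonneg)
next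
  case False
  then show ?thesis using Pn_nonneg[of "Suc n" x y] by (simp add: K_out)
qed

lemma Pn_up: "0 < Pn K d x (x + d)"
proof (induction d arbitrary: x)
  case 0 then show ?case by simp
next
  case (Suc d)
  have "0 < K x (Suc x)" using up_pos[of x] by (auto simp: K_def)
  then have "0 < K x (Suc x) * Pn K d (Suc x) (Suc x + d)" using Suc[of "Suc x"] by simp
  also have "\<dots> \<le> Pn K (Suc d) x (x + Suc d)" using Pn_ge[of x "Suc x" d "Suc x + d"] by simp
  finally show ?case .
qed

lemma Pn_down: "0 < Pn K d (x + d) x"
proof (induction d arbitrary: x)
  case 0 then show ?case by simp
next
  case (Suc d)
  have "0 < K (x + Suc d) (x + d)" using dn_pos[of "x + Suc d"] by (auto simp: K_def)
  then have "0 < K (x + Suc d) (x + d) * Pn K d (x + d) x" using Suc by simp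
  also have "\<dots> \<le> Pn K (Suc d) (x + Suc d) x" using Pn_ge by blast
  finally show ?case .
qed

lemma irred: "irreducible_mc K"
  unfolding irreducible_mc_def
proof (intro allI)
  fix x y
  show "\<exists>n. 0 < Pn K n x y"
  proof (cases "x \<le> y")
    case True
    then show ?thesis using Pn_up[of "y - x" x] by (intro exI[of _ "y - x"]) simp
  next
    case False
    then show ?thesis using Pn_down[of "x - y" y] by (intro exI[of _ "x - y"]) simp
  qed
qed

lemma Kxx_pos: "0 < K x x"
  using up_lt1[of x] updn_lt[of x] by (auto simp: K_def)

lemma aper: "aperiodic_mc K"
  unfolding aperiodic_mc_def period_def
proof
  fix x
  have "1 \<in> {n. 0 < n \<and> 0 < Pn K n x x}"
  proof -
    have "K x x * Pn K 0 x x \<le> Pn K 1 x x" using Pn_ge[of x x 0 x] by simp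
    then show ?thesis using Kxx_pos[of x] by simp
  qed
  then have "Gcd {n. 0 < n \<and> 0 < Pn K n x x} dvd 1" by (rule Gcd_dvd)
  then show "Gcd {n. 0 < n \<and> 0 < Pn K n x x} = 1" by simp
qed


lemma qq_Suc: "qq K y (Suc n) z = (\<Sum>w\<in>-{y} \<inter> nb z. K z w * qq K y n w)"
  by (simp add: row)

lemma qq_nonneg: "0 \<le> qq K y n z"
proof (induction n arbitrary: z)
  case 0 then show ?case by simp
next
  case (Suc n) then show ?case by (simp only: qq_Suc) (intro sum_nonneg mult_nonneg_nonneg K_nonneg)
qed

lemma fp_nonneg: "0 \<le> fp K n z y"
proof (induction n arbitrary: z)
  case 0 then show ?case by simp
next
  case (Suc n) then show ?case
    by (auto simp: K_nonneg intro!: infsum_nonneg mult_nonneg_nonneg)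
qed

lemma rowm: "(\<Sum>w\<in>-{y} \<inter> nb z. K z w) = 1 - K z y"
proof -
  have "(\<Sum>w\<in>nb z. K z w) = (\<Sum>w\<in>nb z \<inter> {y}. K z w) + (\<Sum>w\<in>nb z - {y}. K z w)"
    by (rule sum.Int_Diff) simp
  moreover have "(\<Sum>w\<in>nb z \<inter> {y}. K z w) = K z y"
    by (cases "y \<in> nb z") (auto simp: K_out)
  moreover have "nb z - {y} = -{y} \<inter> nb z" by auto
  ultimately show ?thesis using row_sum1[of z] by simp
qed

lemma fp_qq: "fp K (Suc n) z y = qq K y n z - qq K y (Suc n) z"
proof (induction n arbitrary: z)
  case 0
  have "qq K y (Suc 0) z = (\<Sum>w\<in>-{y} \<inter> nb z. K z w * qq K y 0 w)" by (rule qq_Suc)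
  then show ?case using rowm[where y=y and z=z] by simp
next
  case (Suc n)
  have "fp K (Suc (Suc n)) z y = (\<Sum>w\<in>-{y} \<inter> nb z. K z w * fp K (Suc n) w y)"
    by (simp add: row)
  also have "\<dots> = (\<Sum>w\<in>-{y} \<inter> nb z. K z w * qq K y n w - K z w * qq K y (Suc n) w)"
    using Suc by (simp add: right_diff_distrib)
  also have "\<dots> = qq K y (Suc n) z - qq K y (Suc (Suc n)) z"
    by (simp only: sum_subtractf qq_Suc)
  finally show ?case .
qed

lemma lyap:
  assumes Vnn: "\<And>w. 0 \<le> V w"
    and LC: "\<And>z. z \<noteq> y \<Longrightarrow> 1 + (\<Sum>w\<in>nb z. K z w * V w) \<le> V z"
  shows "(\<Sum>n<N. qq K y n y) \<le> 1 + (\<Sum>w\<in>nb y. K y w * V w)"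
proof -
  have step: "(\<Sum>n<Suc N. qq K y n z) = 1 + (\<Sum>w\<in>-{y} \<inter> nb z. K z w * (\<Sum>n<N. qq K y n w))" for N z
  proof -
    have "(\<Sum>n<Suc N. qq K y n z) = qq K y 0 z + (\<Sum>n<N. qq K y (Suc n) z)"
      by (rule sum.lessThan_Suc_shift)
    also have "\<dots> = 1 + (\<Sum>n<N. \<Sum>w\<in>-{y} \<inter> nb z. K z w * qq K y n w)"
      by (simp only: qq_Suc qq.simps(1))
    also have "\<dots> = 1 + (\<Sum>w\<in>-{y} \<inter> nb z. K z w * (\<Sum>n<N. qq K y n w))"
      by (subst sum.swap) (simp add: sum_distrib_left)
    finally show ?thesis .
  qed
  have mono: "(\<Sum>w\<in>-{y} \<inter> nb z. K z w * (\<Sum>n<N. qq K y n w)) \<le> (\<Sum>w\<in>nb z. K z w * V w)"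
    if IH: "\<And>w. w \<noteq> y \<Longrightarrow> (\<Sum>n<N. qq K y n w) \<le> V w" for N z
  proof -
    have "(\<Sum>w\<in>-{y} \<inter> nb z. K z w * (\<Sum>n<N. qq K y n w)) \<le> (\<Sum>w\<in>-{y} \<inter> nb z. K z w * V w)"
      by (intro sum_mono mult_left_mono IH K_nonneg) auto
    also have "\<dots> \<le> (\<Sum>w\<in>nb z. K z w * V w)"
      by (intro sum_mono2) (auto intro: mult_nonneg_nonneg K_nonneg Vnn)
    finally show ?thesis .
  qed
  have main: "\<forall>z. z \<noteq> y \<longrightarrow> (\<Sum>n<N. qq K y n z) \<le> V z" for N
  proof (induction N)
    case 0 then show ?case using Vnn by simp
  next
    case (Suc N)
    show ?case
    proof (intro allI impI)
      fix z assume "z \<noteq> y"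
      have "(\<Sum>n<Suc N. qq K y n z) \<le> 1 + (\<Sum>w\<in>nb z. K z w * V w)"
        unfolding step using mono[of N z] Suc by simp
      also have "\<dots> \<le> V z" using LC \<open>z \<noteq> y\<close> by blast
      finally show "(\<Sum>n<Suc N. qq K y n z) \<le> V z" .
    qed
  qed
  show ?thesis
  proof (cases N)
    case 0
    have "0 \<le> (\<Sum>w\<in>nb y. K y w * V w)" by (intro sum_nonneg mult_nonneg_nonneg K_nonneg Vnn)
    then show ?thesis using 0 by simp
  next
    case (Suc M)
    have "(\<Sum>w\<in>-{y} \<inter> nb y. K y w * (\<Sum>n<M. qq K y n w)) \<le> (\<Sum>w\<in>nb y. K y w * V w)"
      by (rule mono) (use main[of M] in blast)
    then show ?thesis using Suc step[where N=M and z=y] by (simp del: sum.lessThan_Suc)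
  qed
qed


definition "tt = 2 / u"
definition "LL = 1 / e"
definition VV :: "nat \<Rightarrow> nat \<Rightarrow> real" where
  "VV y z = (if y \<le> z then LL * (real z - real y) else 0) + (\<Sum>j\<in>{z..<y}. tt ^ Suc j)"

lemma u_lt1: "u < 1" using up_ge[of 0] up_lt1[of 0] by linarith
lemma tt_ge1: "1 \<le> tt" using u_pos u_lt1 by (simp add: tt_def)
lemma utt: "u * tt = 2" using u_pos by (simp add: tt_def)
lemma LL_pos: "0 < LL" using e_pos by (simp add: LL_def)
lemma LL_drift: "1 \<le> LL * (dn x - up x)"
proof -
  have "LL * e \<le> LL * (dn x - up x)" using drift[of x] LL_pos by (intro mult_left_mono) auto
  then show ?thesis using e_pos by (simp add: LL_def)
qed

lemma VV_nonneg: "0 \<le> VV y z"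
  unfolding VV_def using LL_pos tt_ge1
  by (intro add_nonneg_nonneg sum_nonneg) auto

lemma VV_below: "w \<le> y \<Longrightarrow> VV y w = (\<Sum>j\<in>{w..<y}. tt ^ Suc j)"
  by (auto simp: VV_def)

lemma VV_above: "y \<le> w \<Longrightarrow> VV y w = LL * (real w - real y)"
  by (auto simp: VV_def)

lemma G_step: "z < y \<Longrightarrow> (\<Sum>j\<in>{z..<y}. tt ^ Suc j) = tt ^ Suc z + (\<Sum>j\<in>{Suc z..<y}. tt ^ Suc j)"
  by (rule sum.atLeast_Suc_lessThan)

lemma LC: "z \<noteq> y \<Longrightarrow> 1 + (\<Sum>w\<in>nb z. K z w * VV y w) \<le> VV y z"
proof -
  assume "z \<noteq> y"
  then consider "y < z" | "z < y \<and> z = 0" | z' where "z < y" "z = Suc z'" by (cases z) force+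
  then show ?thesis
  proof cases
    case 1
    then obtain z' where z: "z = Suc z'" "y \<le> z'" by (cases z) auto
    define c where "c = real z' - real y"
    have e1: "VV y z' = LL * c" "VV y z = LL * (c + 1)" "VV y (Suc z) = LL * (c + 2)"
      using z by (auto simp: VV_above c_def)
    have "1 + (\<Sum>w\<in>nb z. K z w * VV y w) = 1 + dn z * (LL * c) + (1 - up z - dn z) * (LL * (c + 1)) + up z * (LL * (c + 2))"
      using e1 z by (simp add: row_full)
    also have "\<dots> = LL * (c + 1) + (1 - LL * (dn z - up z))" by (simp add: algebra_simps)
    also have "\<dots> \<le> LL * (c + 1)" using LL_drift[of z] by simp
    finally show ?thesis using e1 by simp
  next
    case 2
    then have z: "z = 0" "0 < y" by auto
    define G1 where "G1 = (\<Sum>j\<in>{Suc 0..<y}. tt ^ Suc j)"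
    have e1: "VV y 0 = tt + G1" "VV y 1 = G1"
      using z G_step[of 0 y] by (auto simp: VV_below G1_def)
    have "1 \<le> up 0 * tt" using up_ge[of 0] tt_ge1 utt by (metis mult_right_mono order_trans one_le_numeral order.trans[OF _ mult_right_mono] dual_order.trans  le_numeral_extra(1) zero_le_one) 
    then show ?thesis using e1 z by (simp add: row_full algebra_simps)
  next
    case 3
    have zy: "Suc z \<le> y" "z' \<le> y" "z \<le> y" using 3 by auto
    define G where "G = (\<Sum>j\<in>{Suc z..<y}. tt ^ Suc j)"
    have e1: "VV y z = tt ^ Suc z + G" "VV y (Suc z) = G" "VV y z' = tt ^ z + (tt ^ Suc z + G)"
      using 3 zy G_step[of z y] G_step[of z' y] by (auto simp: VV_below G_def)
    have T1: "1 \<le> tt ^ z" using tt_ge1 by simp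
    have "up z * tt ^ Suc z = (up z * tt) * tt ^ z" by simp
    moreover have "2 \<le> up z * tt" using up_ge[of z] utt tt_ge1 by (metis mult_right_mono order_trans zero_le_one)
    ultimately have "2 * tt ^ z \<le> up z * tt ^ Suc z" using T1 by (metis mult_right_mono order_trans zero_le_one)
    moreover have "dn z * tt ^ z \<le> tt ^ z" using dn_lt1[of z] T1 by (simp add: mult_le_cancel_right1)
    ultimately have key: "1 + dn z * tt ^ z \<le> up z * tt ^ Suc z" using T1 by linarith
    have "1 + (\<Sum>w\<in>nb z. K z w * VV y w) = 1 + dn z * (tt ^ z + (tt ^ Suc z + G)) + (1 - up z - dn z) * (tt ^ Suc z + G) + up z * G"
      using e1 3 by (simp add: row_full)
    also have "\<dots> = (tt ^ Suc z + G) + (1 + dn z * tt ^ z - up z * tt ^ Suc z)" by (simp add: algebra_simps)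
    also have "\<dots> \<le> tt ^ Suc z + G" using key by simp
    finally show ?thesis using e1 by simp
  qed
qed

lemma pos_rec: "positive_recurrent_mc K"
  unfolding positive_recurrent_mc_def
proof (intro allI conjI)
  fix x
  define B where "B = 1 + (\<Sum>w\<in>nb x. K x w * VV x w)"
  define q where "q = (\<lambda>n. qq K x n x)"
  have Sb: "(\<Sum>n<N. q n) \<le> B" for N
    unfolding q_def B_def by (rule lyap) (auto intro: VV_nonneg LC)
  have qnn: "0 \<le> q n" for n unfolding q_def by (rule qq_nonneg)
  have sq: "summable q"
  proof (rule bounded_imp_summable[where B=B])
    show "0 \<le> q n" for n by (rule qnn)
    show "(\<Sum>k\<le>n. q k) \<le> B" for n using Sb[of "Suc n"] by (simp only: lessThan_Suc_atMost)
  qed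
  have q0: "q \<longlonglongrightarrow> 0" by (rule summable_LIMSEQ_zero[OF sq])
  have fpq: "fp K (Suc n) x x = q n - q (Suc n)" for n unfolding q_def by (rule fp_qq)
  have "(\<lambda>n. q n - q (Suc n)) sums (q 0 - 0)" by (rule telescope_sums'[OF q0])
  then have "(\<lambda>n. fp K (Suc n) x x) sums 1" using fpq by (simp add: q_def)
  then show "(\<lambda>n. fp K n x x) sums 1" by (subst (asm) sums_Suc_iff) simp
  have "summable (\<lambda>n. real (Suc n) * fp K (Suc n) x x)"
  proof (rule bounded_imp_summable[where B=B])
    show "0 \<le> real (Suc n) * fp K (Suc n) x x" for n using fp_nonneg[of "Suc n" x x] by (simp del: fp.simps)
    show "(\<Sum>k\<le>n. real (Suc k) * fp K (Suc k) x x) \<le> B" for n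
    proof -
      have "(\<Sum>k\<le>n. real (Suc k) * fp K (Suc k) x x) = (\<Sum>k<Suc n. real (Suc k) * (q k - q (Suc k)))"
        by (simp only: fpq lessThan_Suc_atMost)
      also have "\<dots> = (\<Sum>k<Suc n. q k) - real (Suc n) * q (Suc n)" by (rule telesc)
      also have "\<dots> \<le> B" using Sb[of "Suc n"] qnn[of "Suc n"] by (smt (verit) of_nat_0_le_iff mult_nonneg_nonneg)
      finally show ?thesis .
    qed
  qed
  then show "summable (\<lambda>n. real n * fp K n x x)"
    using summable_Suc_iff[of "\<lambda>n. real n * fp K n x x"] by (simp del: fp.simps of_nat_Suc)
qed


definition pii :: "nat \<Rightarrow> real" where "pii x = (\<Prod>i<x. up i / dn (Suc i))"

lemma pii_0[simp]: "pii 0 = 1" by (simp add: pii_def)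
lemma pii_Suc: "pii (Suc x) = pii x * (up x / dn (Suc x))" by (simp add: pii_def)
lemma pii_pos: "0 < pii x"
  unfolding pii_def using up_pos dn_pos by (intro prod_pos) (auto intro: divide_pos_pos)
lemma rho_pos: "0 < \<rho>"
proof (rule ccontr)
  assume "\<not> 0 < \<rho>"
  then have "\<rho> * dn (Suc 0) \<le> 0" using dn_pos[of 1] by (simp add: mult_nonpos_nonneg)
  then show False using ratio[of 0] up_pos[of 0] by linarith
qed
lemma pii_le: "pii x \<le> \<rho> ^ x"
proof (induction x)
  case 0 then show ?case by simp
next
  case (Suc x)
  have r: "up x / dn (Suc x) \<le> \<rho>" using ratio[of x] dn_pos[of "Suc x"] by (simp add: divide_le_eq)
  have "pii (Suc x) \<le> \<rho> ^ x * \<rho>" unfolding pii_Suc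
    using Suc r pii_pos[of x] up_pos[of x] dn_pos[of "Suc x"]
    by (intro mult_mono) auto
  then show ?case by (simp add: mult.commute)
qed

lemma summable_pii: "summable pii"
  by (rule summable_comparison_test'[where g="\<lambda>n. \<rho> ^ n" and N=0])
     (use rho_pos rho_lt pii_pos pii_le in \<open>auto intro: summable_geometric simp: less_imp_le\<close>)

definition "ZZ = suminf pii"
lemma ZZ_ge1: "1 \<le> ZZ"
proof -
  have "sum pii {0} \<le> suminf pii"
    by (rule sum_le_suminf[OF summable_pii]) (auto intro: less_imp_le pii_pos)
  then show ?thesis by (simp add: ZZ_def)
qed

definition "sd x = pii x / ZZ"

lemma sd_nonneg: "0 \<le> sd x" using pii_pos[of x] ZZ_ge1 by (simp add: sd_def)
lemma sd_le: "sd x \<le> \<rho> ^ x"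
proof -
  have "sd x \<le> pii x" using pii_pos[of x] ZZ_ge1 unfolding sd_def
    by (simp add: divide_le_eq mult_le_cancel_left1)
  then show ?thesis using pii_le[of x] by linarith
qed
lemma sd_DB: "sd (Suc x) * dn (Suc x) = sd x * up x"
  using dn_pos[of "Suc x"] by (simp add: sd_def pii_Suc field_simps)



lemma col_stat:
  assumes DB: "\<And>x. f (Suc x) * dn (Suc x) = f x * up x"
  shows "(\<Sum>x\<in>nb y. f x * K x y) = f y"
proof (cases y)
  case 0
  have "(\<Sum>x\<in>nb y. f x * K x y) = f 0 * (1 - up 0) + f 1 * dn 1" using 0 by (simp add: col_full)
  also have "\<dots> = f 0" using DB[of 0] by (simp add: right_diff_distrib)
  finally show ?thesis using 0 by simp
next
  case (Suc y')
  have "(\<Sum>x\<in>nb y. f x * K x y) = f y' * up y' + f y * (1 - up y - dn y) + f (Suc y) * dn (Suc y)"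
    using Suc by (simp add: col_full)
  also have "\<dots> = f y" using DB[of y'] DB[of y] Suc by (simp add: right_diff_distrib)
  finally show ?thesis .
qed


lemma stat_sd: "stationary K sd"
  unfolding stationary_def
proof (intro conjI allI)
  show "0 \<le> sd x" for x by (rule sd_nonneg)
  have "pii sums ZZ" unfolding ZZ_def by (rule summable_sums[OF summable_pii])
  then have "(\<lambda>x. pii x / ZZ) sums (ZZ / ZZ)" by (rule sums_divide)
  then show "sd sums 1" using ZZ_ge1 by (simp add: sd_def[abs_def])
  show "((\<lambda>x. sd x * K x y) has_sum sd y) UNIV" for y
    using col_has_sum[of sd y] col_stat[of sd y, OF sd_DB] by simp
qed

lemma stat_unique:
  assumes st: "stationary K s"
  shows "s = sd"
proof -
  have eq: "s y = (\<Sum>x\<in>nb y. s x * K x y)" for y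
    using st col_has_sum[of s y] unfolding stationary_def by (blast intro: has_sum_unique)
  have DB: "s (Suc x) * dn (Suc x) = s x * up x" for x
  proof (induction x)
    case 0
    have "s 0 = s 0 * (1 - up 0) + s 1 * dn 1" using eq[of 0] by (simp add: col_full)
    then show ?case by (simp add: right_diff_distrib)
  next
    case (Suc x)
    have "s (Suc x) = s x * up x + s (Suc x) * (1 - up (Suc x) - dn (Suc x)) + s (Suc (Suc x)) * dn (Suc (Suc x))"
      using eq[of "Suc x"] by (simp add: col_full)
    then show ?case using Suc by (simp add: right_diff_distrib)
  qed
  define c where "c = s 0"
  have sp: "s x = c * pii x" for x
  proof (induction x)
    case 0 then show ?case by (simp add: c_def)
  next
    case (Suc x)
    have "s (Suc x) = s x * up x / dn (Suc x)" using DB[of x] dn_pos[of "Suc x"]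
      by (simp add: eq_divide_eq)
    then show ?case using Suc by (simp add: pii_Suc)
  qed
  have "s sums 1" using st by (simp add: stationary_def)
  moreover have "(\<lambda>x. c * pii x) sums (c * ZZ)" unfolding ZZ_def
    by (rule sums_mult[OF summable_sums[OF summable_pii]])
  then have "s sums (c * ZZ)" using sp by presburger
  ultimately have "c * ZZ = 1" by (rule sums_unique2[symmetric])
  then have "c = 1 / ZZ" using ZZ_ge1 by (simp add: eq_divide_eq)
  then show ?thesis using sp by (auto simp: sd_def)
qed

lemma ex1_stat: "\<exists>!s. stationary K s" using stat_sd stat_unique by blast

lemma invdist_eq: "invdist K = sd"
  unfolding invdist_def using stat_sd stat_unique by blast

lemma moment:
  assumes "summable (\<lambda>x. real x ^ q * \<rho> ^ x)"
  shows "summable (\<lambda>x. real x ^ q * invdist K x) \<and> (\<Sum>x. real x ^ q * invdist K x) \<le> (\<Sum>x. real x ^ q * \<rho> ^ x)"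
proof -
  have b: "real x ^ q * sd x \<le> real x ^ q * \<rho> ^ x" for x using sd_le[of x] by (intro mult_left_mono) auto
  have s: "summable (\<lambda>x. real x ^ q * sd x)"
    by (rule summable_comparison_test'[OF assms, where N=0]) (use b sd_nonneg in auto)
  show ?thesis unfolding invdist_eq using s b assms by (auto intro: suminf_le)
qed

end

lemma ineq_up_ge:
  fixes d al a :: real assumes "d < 1" "0 < al" "al \<le> a" "a \<le> 1"
  shows "(1 - d) * al / 2 \<le> (1 - d) * a / (1 + a)"
proof -
  have "al / 2 \<le> a / (1 + a)"
  proof -
    have "al * (1 + a) \<le> a * (1 + a)" using assms by (intro mult_right_mono) auto
    also have "\<dots> \<le> a * 2" using assms by (intro mult_left_mono) auto
    finally have "al * (1 + a) \<le> a * 2" .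
    then show ?thesis using assms by (simp add: field_simps)
  qed
  then have "(1 - d) * (al / 2) \<le> (1 - d) * (a / (1 + a))" using assms by (intro mult_left_mono) auto
  then show ?thesis by simp
qed

lemma ineq_updn:
  fixes d a :: real assumes "d < 1" "0 < d" "0 < a"
  shows "(1 - d) * a / (1 + a) + d / (1 + a) < 1"
proof -
  have "0 < d * a" using assms by simp
  moreover have "(1 - d) * a = a - d * a" by (simp add: algebra_simps)
  ultimately have "(1 - d) * a + d < 1 + a" using assms by linarith
  then have "((1 - d) * a + d) / (1 + a) < 1" using assms by (simp add: pos_divide_less_eq)
  then show ?thesis by (simp add: add_divide_distrib)
qed

lemma ineq_drift:
  fixes d a :: real assumes "1/2 < d" "d < 1" "0 < a" "a \<le> 1"
  shows "(2 * d - 1) / 2 \<le> d / (1 + a) - (1 - d) * a / (1 + a)"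
proof -
  have "(1 - d) * a \<le> 1 - d" using assms by (simp add: mult_left_le)
  then have h: "2 * d - 1 \<le> d - (1 - d) * a" by linarith
  have "(2 * d - 1) * (1 + a) \<le> (2 * d - 1) * 2" using assms by (intro mult_left_mono) auto
  moreover have "(2 * d - 1) * 2 \<le> 2 * (d - (1 - d) * a)" using h by (subst mult.commute) simp
  ultimately have "(2 * d - 1) * (1 + a) \<le> 2 * (d - (1 - d) * a)" by (rule order_trans)
  then show ?thesis using assms by (simp add: field_simps diff_divide_distrib[symmetric])
qed

lemma ineq_ratio:
  fixes d a b :: real assumes "0 < d" "d < 1" "0 < a" "a \<le> 1" "0 < b" "b \<le> 1"
  shows "(1 - d) * a / (1 + a) \<le> (1 - d) / d * (d / (1 + b))"
proof -
  have "a * b \<le> 1" using assms by (intro mult_le_one) auto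
  then have "a * (1 + b) \<le> 1 + a" by (simp add: algebra_simps)
  then have "a / (1 + a) \<le> 1 / (1 + b)" using assms by (simp add: field_simps)
  then have "(1 - d) * (a / (1 + a)) \<le> (1 - d) * (1 / (1 + b))" using assms by (intro mult_left_mono) auto
  then show ?thesis using assms by simp
qed

lemma stay_eq: "0 < (a::real) \<Longrightarrow> (1 - d + d * a) / (1 + a) = 1 - (1 - d) * a / (1 + a) - d / (1 + a)"
proof -
  assume "0 < a"
  then have ne: "1 + a \<noteq> 0" by simp
  have "1 - (1 - d) * a / (1 + a) - d / (1 + a) = ((1 + a) - (1 - d) * a - d) / (1 + a)"
    using ne by (simp add: diff_divide_distrib)
  also have "(1 + a) - (1 - d) * a - d = 1 - d + d * a" by (simp add: algebra_simps)
  finally show ?thesis by simp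
qed

lemma package:
  fixes \<delta> a_lo :: real and g :: "nat \<Rightarrow> real \<Rightarrow> real"
  assumes d: "1/2 < \<delta>" "\<delta> < 1" and al: "0 < a_lo" "a_lo < 1"
    and ga: "\<forall>x. g x m \<in> {a_lo..1}"
  shows "irreducible_mc (kern \<delta> g m) \<and> aperiodic_mc (kern \<delta> g m) \<and>
     positive_recurrent_mc (kern \<delta> g m) \<and> (\<exists>!s. stationary (kern \<delta> g m) s) \<and>
     (\<forall>q. summable (\<lambda>x. real x ^ q * invdist (kern \<delta> g m) x) \<and>
          (\<Sum>x. real x ^ q * invdist (kern \<delta> g m) x) \<le> (\<Sum>x. real x ^ q * ((1 - \<delta>) / \<delta>) ^ x))"
proof -
  define a where "a x = g x m" for x
  have a: "a_lo \<le> a x" "a x \<le> 1" "0 < a x" for x using ga al unfolding a_def by (auto intro: less_le_trans)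
  define up where "up x = (1 - \<delta>) * a x / (1 + a x)" for x
  define dn where "dn x = \<delta> / (1 + a x)" for x
  interpret bdc up dn "(1 - \<delta>) * a_lo / 2" "(2 * \<delta> - 1) / 2" "(1 - \<delta>) / \<delta>"
  proof
    show "0 < (1 - \<delta>) * a_lo / 2" using d al by simp
    show "(1 - \<delta>) * a_lo / 2 \<le> up x" for x unfolding up_def using d al a[of x] by (intro ineq_up_ge) auto
    show "0 < dn x" for x unfolding dn_def using d a[of x] by simp
    show "up x + dn x < 1" for x unfolding up_def dn_def using d a[of x] by (intro ineq_updn) auto
    show "0 < (2 * \<delta> - 1) / 2" using d by simp
    show "(2 * \<delta> - 1) / 2 \<le> dn x - up x" for x unfolding up_def dn_def using d a[of x] by (intro ineq_drift) auto
    show "(1 - \<delta>) / \<delta> < 1" using d by simp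
    show "up x \<le> (1 - \<delta>) / \<delta> * dn (Suc x)" for x
      unfolding up_def dn_def using d a[of x] a[of "Suc x"] by (intro ineq_ratio) auto
  qed
  have KK: "kern \<delta> g m = K"
  proof (intro ext)
    fix x y
    show "kern \<delta> g m x y = K x y"
      using a[of x] unfolding kern_def W_def K_def up_def dn_def a_def[symmetric]
      by (auto simp: stay_eq)
  qed
  have sg: "summable (\<lambda>x. real x ^ q * ((1 - \<delta>) / \<delta>) ^ x)" for q
    using d by (intro summable_poly_geo) auto
  show ?thesis unfolding KK using irred aper pos_rec ex1_stat moment[OF sg] by blast
qed


lemma rpow_le:
  assumes "0 \<le> pk"
  shows "rpow (real x) pk \<le> 1 + real x ^ nat \<lceil>pk\<rceil>"
proof (cases "pk = 0")
  case True then show ?thesis by (simp add: rpow_def)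
next
  case False
  show ?thesis
  proof (cases "x = 0")
    case True then show ?thesis using False by (simp add: rpow_def)
  next
    case x: False
    have "real x powr pk \<le> real x powr real (nat \<lceil>pk\<rceil>)"
      using x assms by (intro powr_mono) (auto simp: real_nat_ceiling_ge)
    also have "\<dots> = real x ^ nat \<lceil>pk\<rceil>" using x by (simp add: powr_realpow)
    finally show ?thesis using False by (simp add: rpow_def)
  qed
qed

lemma invdist_props:
  assumes "\<exists>!s. stationary P s"
  shows "(\<forall>x. 0 \<le> invdist P x) \<and> invdist P sums 1"
proof -
  have "stationary P (invdist P)" unfolding invdist_def using assms by (rule theI')
  then show ?thesis by (simp add: stationary_def)
qed

lemma magg_bound:
  fixes \<delta> a_lo Ck pk :: real and k :: "nat \<Rightarrow> real"
  assumes d: "1/2 < \<delta>" "\<delta> < 1" and al: "0 < a_lo" "a_lo < 1"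
    and k: "\<forall>x. 0 \<le> k x" "0 < Ck" "0 \<le> pk" "\<forall>x. k x \<le> Ck * rpow (real x) pk"
    and ga: "\<forall>x. g x m \<in> {a_lo..1}"
  shows "summable (\<lambda>x. k x * invdist (kern \<delta> g m) x) \<and> 0 \<le> Magg k (invdist (kern \<delta> g m)) \<and>
    Magg k (invdist (kern \<delta> g m)) \<le> Ck * (1 + (\<Sum>x. real x ^ nat \<lceil>pk\<rceil> * ((1 - \<delta>) / \<delta>) ^ x))"
proof -
  define s where "s = invdist (kern \<delta> g m)"
  define n where "n = nat \<lceil>pk\<rceil>"
  define Cn where "Cn = (\<Sum>x. real x ^ n * ((1 - \<delta>) / \<delta>) ^ x)"
  have P: "(\<exists>!s. stationary (kern \<delta> g m) s) \<and> summable (\<lambda>x. real x ^ n * s x) \<and> (\<Sum>x. real x ^ n * s x) \<le> Cn"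
    using package[where g=g and m=m, OF d al ga] unfolding s_def Cn_def by blast
  have sn: "\<forall>x. 0 \<le> s x" and s1: "s sums 1" using invdist_props[of "kern \<delta> g m"] P unfolding s_def by auto
  have ss: "summable s" using s1 by (rule sums_summable)
  have sm: "summable (\<lambda>x. real x ^ n * s x)" using P by blast
  have b: "k x * s x \<le> Ck * (s x + real x ^ n * s x)" for x
  proof -
    have "k x \<le> Ck * (1 + real x ^ n)" using k rpow_le[of pk x] unfolding n_def
      by (smt (verit) mult_left_mono)
    then have "k x * s x \<le> Ck * (1 + real x ^ n) * s x" using sn by (intro mult_right_mono) auto
    then show ?thesis by (simp add: algebra_simps)
  qed
  have nn: "0 \<le> k x * s x" for x using k sn by simp
  have sB: "summable (\<lambda>x. Ck * (s x + real x ^ n * s x))"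
    by (intro summable_mult summable_add ss sm)
  have sk: "summable (\<lambda>x. k x * s x)"
    by (rule summable_comparison_test'[OF sB, where N=0]) (use b nn in auto)
  have "(\<Sum>x. k x * s x) \<le> (\<Sum>x. Ck * (s x + real x ^ n * s x))"
    by (rule suminf_le[OF b sk sB])
  also have "\<dots> = Ck * (1 + (\<Sum>x. real x ^ n * s x))"
    using suminf_mult[OF summable_add[OF ss sm], of Ck] suminf_add[OF ss sm] sums_unique[OF s1] by simp
  also have "\<dots> \<le> Ck * (1 + Cn)" using P k by (intro mult_left_mono) auto
  finally have up: "(\<Sum>x. k x * s x) \<le> Ck * (1 + Cn)" .
  have "0 \<le> (\<Sum>x. k x * s x)" by (rule suminf_nonneg[OF sk nn])
  then show ?thesis using sk up unfolding Magg_def s_def[symmetric] Cn_def n_def by simp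
qed

theorem mainTheorem6:
  fixes \<delta> a_lo Ck pk :: real and k :: "nat \<Rightarrow> real"
  assumes "1/2 < \<delta>" and "\<delta> < 1"
    and "0 < a_lo" and "a_lo < 1"
    and "\<forall>x. 0 \<le> k x" and "mono k"
    and "0 < Ck" and "0 \<le> pk"
    and "\<forall>x. k x \<le> Ck * rpow (real x) pk"
  shows
    "(\<forall>g m. (\<forall>x. g x m \<in> {a_lo..1}) \<longrightarrow>
        irreducible_mc (kern \<delta> g m) \<and> aperiodic_mc (kern \<delta> g m) \<and>
        positive_recurrent_mc (kern \<delta> g m) \<and> (\<exists>!s. stationary (kern \<delta> g m) s))
     \<and> (\<forall>q::nat. \<exists>C. \<forall>g m. (\<forall>x. g x m \<in> {a_lo..1}) \<longrightarrow>
           summable (\<lambda>x. real x ^ q * invdist (kern \<delta> g m) x) \<and>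
           (\<Sum>x. real x ^ q * invdist (kern \<delta> g m) x) \<le> C)
     \<and> (\<exists>b>0. \<exists>C. \<forall>g. (\<forall>x m. g x m \<in> {a_lo..1}) \<longrightarrow>
           (\<forall>m\<in>{0..b}. (\<exists>!s. stationary (kern \<delta> g m) s) \<and>
               summable (\<lambda>x. \<bar>real x - 0\<bar> ^ 2 * invdist (kern \<delta> g m) x) \<and>
               (\<Sum>x. \<bar>real x - 0\<bar> ^ 2 * invdist (kern \<delta> g m) x) \<le> C) \<and>
           summable (\<lambda>x. k x * invdist (kern \<delta> g 0) x) \<and>
           Magg k (invdist (kern \<delta> g 0)) \<ge> 0 \<and>
           summable (\<lambda>x. k x * invdist (kern \<delta> g b) x) \<and>
           Magg k (invdist (kern \<delta> g b)) \<le> b)"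
proof (intro conjI)
  note d = assms(1,2) and al = assms(3,4) and kk = assms(5,7,8,9)
  show "\<forall>g m. (\<forall>x. g x m \<in> {a_lo..1}) \<longrightarrow>
        irreducible_mc (kern \<delta> g m) \<and> aperiodic_mc (kern \<delta> g m) \<and>
        positive_recurrent_mc (kern \<delta> g m) \<and> (\<exists>!s. stationary (kern \<delta> g m) s)"
    using package[OF d al] by blast
  show "\<forall>q::nat. \<exists>C. \<forall>g m. (\<forall>x. g x m \<in> {a_lo..1}) \<longrightarrow>
           summable (\<lambda>x. real x ^ q * invdist (kern \<delta> g m) x) \<and>
           (\<Sum>x. real x ^ q * invdist (kern \<delta> g m) x) \<le> C"
    using package[OF d al] by blast
  define Cn where "Cn = (\<Sum>x. real x ^ nat \<lceil>pk\<rceil> * ((1 - \<delta>) / \<delta>) ^ x)"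
  have "0 \<le> Cn" unfolding Cn_def using d
    by (intro suminf_nonneg summable_poly_geo) auto
  define b where "b = Ck * (1 + Cn) + 1"
  have bpos: "0 < b" unfolding b_def using \<open>0 \<le> Cn\<close> kk by (smt (verit) mult_pos_pos)
  define C2 where "C2 = (\<Sum>x. real x ^ 2 * ((1 - \<delta>) / \<delta>) ^ x)"
  show "\<exists>b>0. \<exists>C. \<forall>g. (\<forall>x m. g x m \<in> {a_lo..1}) \<longrightarrow>
           (\<forall>m\<in>{0..b}. (\<exists>!s. stationary (kern \<delta> g m) s) \<and>
               summable (\<lambda>x. \<bar>real x - 0\<bar> ^ 2 * invdist (kern \<delta> g m) x) \<and>
               (\<Sum>x. \<bar>real x - 0\<bar> ^ 2 * invdist (kern \<delta> g m) x) \<le> C) \<and>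
           summable (\<lambda>x. k x * invdist (kern \<delta> g 0) x) \<and>
           Magg k (invdist (kern \<delta> g 0)) \<ge> 0 \<and>
           summable (\<lambda>x. k x * invdist (kern \<delta> g b) x) \<and>
           Magg k (invdist (kern \<delta> g b)) \<le> b"
  proof (rule exI[of _ b], rule conjI[OF bpos], rule exI[of _ C2], intro allI impI ballI conjI)
    fix g :: "nat \<Rightarrow> real \<Rightarrow> real" and m :: real assume ga: "\<forall>x m. g x m \<in> {a_lo..1}"
    then have gm: "\<forall>x. g x m \<in> {a_lo..1}" for m by blast
    note P = package[where g=g and m=m, OF d al gm[of m]]
    show "\<exists>!s. stationary (kern \<delta> g m) s" using P by blast
    show "summable (\<lambda>x. \<bar>real x - 0\<bar> ^ 2 * invdist (kern \<delta> g m) x)" using P by simp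
    show "(\<Sum>x. \<bar>real x - 0\<bar> ^ 2 * invdist (kern \<delta> g m) x) \<le> C2" using P unfolding C2_def by simp
  next
    fix g :: "nat \<Rightarrow> real \<Rightarrow> real" assume ga: "\<forall>x m. g x m \<in> {a_lo..1}"
    then have gm: "\<forall>x. g x m \<in> {a_lo..1}" for m by blast
    note M0 = magg_bound[where g=g and m=0, OF d al kk gm[of 0]]
    note Mb = magg_bound[where g=g and m=b, OF d al kk gm[of b]]
    show "summable (\<lambda>x. k x * invdist (kern \<delta> g 0) x)" using M0 by blast
    show "Magg k (invdist (kern \<delta> g 0)) \<ge> 0" using M0 by blast
    show "summable (\<lambda>x. k x * invdist (kern \<delta> g b) x)" using Mb by blast
    show "Magg k (invdist (kern \<delta> g b)) \<le> b" using Mb unfolding Cn_def[symmetric] b_def by linarith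
  qed
qed

end
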